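(* Let $m,n,w,d,l$ be positive integers with $w\le m$. Let $n_0=n>n_1>\dots>n_{l-1}$ be a decreasing sequence of positive integers such that for all $1\le i\le l-1$: $n_i$ divides $nw$ and $\frac{nw}{m}\le n_i\le\left(1-\frac{d}{nw}\right)n_{i-1}$. Put $w_i=\frac{nw}{n_i}$. Then $$\sum_{i=0}^{l-1}B(n,n_i,d)\,A(m,n_i,w_i,d)\le B(mn,nw,d).$$
   Context: $J(m,w)$ denotes the set of binary vectors of length $m$ and Hamming weight $w$. Elements of $J(m,w)^n$ are identified with $m\times n$ binary matrices all of whose columns have weight $w$, with binary Hamming distance. $A(m,n,w,d)$ is the maximum cardinality of a nonempty subset of $J(m,w)^n$ with pairwise Hamming distances at least $2d$. $B(N,W,d)$ is the maximum cardinality of a nonempty subset of $J(N,W)$ with pairwise Hamming distances at least $2d$. *)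

theory Defs
  imports Complex_Main "HOL-Library.FuncSet"
begin

text \<open>Binary vectors of length N are identified with their supports, i.e. subsets
of {0..<N}; the Hamming weight is the cardinality and the Hamming distance is the
cardinality of the symmetric difference.\<close>

definition J :: "nat \<Rightarrow> nat \<Rightarrow> nat set set" where
  "J N W = {S. S \<subseteq> {..<N} \<and> card S = W}"

definition hdist :: "nat set \<Rightarrow> nat set \<Rightarrow> nat" where
  "hdist S T = card ((S - T) \<union> (T - S))"

text \<open>Elements of J(m,w)^n: n-tuples of columns (functions on {0..<n}, extensional),
i.e. m x n binary matrices with all columns of weight w.\<close>

definition Jpow :: "nat \<Rightarrow> nat \<Rightarrow> nat \<Rightarrow> (nat \<Rightarrow> nat set) set" where
  "Jpow m w n = PiE {..<n} (\<lambda>_. J m w)"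

definition mdist :: "nat \<Rightarrow> (nat \<Rightarrow> nat set) \<Rightarrow> (nat \<Rightarrow> nat set) \<Rightarrow> nat" where
  "mdist n X Y = (\<Sum>j<n. hdist (X j) (Y j))"

definition A :: "nat \<Rightarrow> nat \<Rightarrow> nat \<Rightarrow> nat \<Rightarrow> nat" where
  "A m n w d = Max {card C | C. C \<subseteq> Jpow m w n \<and> C \<noteq> {} \<and>
      (\<forall>X\<in>C. \<forall>Y\<in>C. X \<noteq> Y \<longrightarrow> mdist n X Y \<ge> 2 * d)}"

definition B :: "nat \<Rightarrow> nat \<Rightarrow> nat \<Rightarrow> nat" where
  "B N W d = Max {card C | C. C \<subseteq> J N W \<and> C \<noteq> {} \<and>
      (\<forall>S\<in>C. \<forall>T\<in>C. S \<noteq> T \<longrightarrow> hdist S T \<ge> 2 * d)}"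

end

theory Submission
  imports Defs
begin

definition enum :: "nat set \<Rightarrow> nat \<Rightarrow> nat" where
  "enum S = (SOME h. bij_betw h {..<card S} S)"

definition idx :: "nat set \<Rightarrow> nat \<Rightarrow> nat" where
  "idx S = inv_into {..<card S} (enum S)"

lemma bij_enum: "finite S \<Longrightarrow> bij_betw (enum S) {..<card S} S"
proof -
  assume "finite S"
  then have "\<exists>h. bij_betw h {..<card S} S"
    using ex_bij_betw_nat_finite[of S] by (simp add: atLeast0LessThan)
  then show ?thesis unfolding enum_def by (rule someI_ex)
qed

lemma bij_idx: "finite S \<Longrightarrow> bij_betw (idx S) S {..<card S}"
  unfolding idx_def using bij_enum bij_betw_inv_into by blast

lemma idx_lt: "finite S \<Longrightarrow> c \<in> S \<Longrightarrow> idx S c < card S"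
  using bij_idx bij_betwE by blast

definition emb :: "nat \<Rightarrow> nat set \<Rightarrow> (nat \<Rightarrow> nat set) \<Rightarrow> nat set" where
  "emb m S X = (\<lambda>(c,r). c*m+r) ` (SIGMA c:S. X (idx S c))"

lemma pm_aux:
  fixes a b c r m :: nat
  assumes h: "a * m + b = c * m + r" "b < m" "r < m"
  shows "a = c \<and> b = r"
proof -
  have m: "m > 0" using h by simp
  have "(a*m+b) div m = a" using h(2) m by simp
  moreover have "(c*m+r) div m = c" using h(3) m by simp
  ultimately have "a = c" using h(1) by metis
  with h show ?thesis by simp
qed

lemma pm_inj: "inj_on (\<lambda>(c,r). c*m+r) (UNIV \<times> {..<m::nat})"
  by (rule inj_onI) (auto dest: pm_aux)

lemma sig_sub:
  assumes "finite S" "\<forall>j<card S. X j \<in> J m w"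
  shows "(SIGMA c:S. X (idx S c)) \<subseteq> UNIV \<times> {..<m}"
proof
  fix p assume "p \<in> (SIGMA c:S. X (idx S c))"
  then obtain c r where p: "p = (c, r)" "c \<in> S" "r \<in> X (idx S c)" by auto
  have "idx S c < card S" using idx_lt[OF assms(1) p(2)] .
  then have "X (idx S c) \<subseteq> {..<m}" using assms(2) unfolding J_def by blast
  then show "p \<in> UNIV \<times> {..<m}" using p by auto
qed

lemma card_emb:
  assumes "finite S" "\<forall>j<card S. X j \<in> J m w"
  shows "card (emb m S X) = card S * w"
proof -
  have "card (emb m S X) = card (SIGMA c:S. X (idx S c))"
    unfolding emb_def by (rule card_image, rule inj_on_subset[OF pm_inj sig_sub[OF assms]])
  also have "\<dots> = (\<Sum>c\<in>S. card (X (idx S c)))"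
    by (rule card_SigmaI) (use assms idx_lt in \<open>auto simp: J_def intro: finite_subset\<close>)
  also have "\<dots> = (\<Sum>c\<in>S. w)"
    by (rule sum.cong) (use assms idx_lt in \<open>auto simp: J_def\<close>)
  finally show ?thesis by simp
qed

lemma emb_sub:
  assumes "finite S" "\<forall>j<card S. X j \<in> J m w" "S \<subseteq> {..<n}"
  shows "emb m S X \<subseteq> {..<m*n}"
proof
  fix p assume "p \<in> emb m S X"
  then obtain c r where p: "p = c*m+r" "c \<in> S" "r \<in> X (idx S c)" unfolding emb_def by auto
  have "r < m" using sig_sub[OF assms(1,2)] p by auto
  have "c < n" using p assms(3) by auto
  then have "c + 1 \<le> n" by simp
  then have "(c+1)*m \<le> n*m" by (rule mult_right_mono) simp
  then show "p \<in> {..<m*n}" using p \<open>r<m\<close> by (simp add: algebra_simps)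
qed

lemma finite_emb:
  assumes "finite S" "\<forall>j<card S. X j \<in> J m w"
  shows "finite (emb m S X)"
proof -
  have "(SIGMA c:S. X (idx S c)) \<subseteq> S \<times> {..<m}" using sig_sub[OF assms] by auto
  then have "finite (SIGMA c:S. X (idx S c))" using assms(1) by (meson finite_SigmaI finite_lessThan finite_subset)
  then show ?thesis unfolding emb_def by simp
qed

lemma card_int_emb:
  assumes "finite S" "\<forall>j<card S. X j \<in> J m w"
    and "finite T" "\<forall>j<card T. Y j \<in> J m w'"
  shows "card (emb m S X \<inter> emb m T Y) = (\<Sum>c\<in>S\<inter>T. card (X (idx S c) \<inter> Y (idx T c)))"
proof -
  have "emb m S X \<inter> emb m T Y = (\<lambda>(c,r). c*m+r) ` ((SIGMA c:S. X (idx S c)) \<inter> (SIGMA c:T. Y (idx T c)))"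
    unfolding emb_def
    by (rule inj_on_image_Int[OF pm_inj sig_sub[OF assms(1,2)] sig_sub[OF assms(3,4)], symmetric])
  also have "(SIGMA c:S. X (idx S c)) \<inter> (SIGMA c:T. Y (idx T c)) = (SIGMA c:S\<inter>T. X (idx S c) \<inter> Y (idx T c))"
    by auto
  finally have e: "emb m S X \<inter> emb m T Y = (\<lambda>(c,r). c*m+r) ` (SIGMA c:S\<inter>T. X (idx S c) \<inter> Y (idx T c))" .
  have sub: "(SIGMA c:S\<inter>T. X (idx S c) \<inter> Y (idx T c)) \<subseteq> UNIV \<times> {..<m}"
    using sig_sub[OF assms(1,2)] by auto
  have "card (emb m S X \<inter> emb m T Y) = card (SIGMA c:S\<inter>T. X (idx S c) \<inter> Y (idx T c))"
    unfolding e by (rule card_image, rule inj_on_subset[OF pm_inj sub])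
  also have "\<dots> = (\<Sum>c\<in>S\<inter>T. card (X (idx S c) \<inter> Y (idx T c)))"
  proof (rule card_SigmaI)
    show "finite (S \<inter> T)" using assms by simp
    show "\<forall>c\<in>S \<inter> T. finite (X (idx S c) \<inter> Y (idx T c))"
    proof
      fix c assume "c \<in> S \<inter> T"
      then have "X (idx S c) \<subseteq> {..<m}" using assms idx_lt unfolding J_def by auto
      then show "finite (X (idx S c) \<inter> Y (idx T c))" by (meson finite_Int finite_lessThan finite_subset)
    qed
  qed
  finally show ?thesis .
qed

lemma hdist_card:
  assumes "finite S" "finite T"
  shows "hdist S T + 2 * card (S \<inter> T) = card S + card T"
proof -
  have "hdist S T = card (S - T) + card (T - S)"
    unfolding hdist_def by (rule card_Un_disjoint) (use assms in auto)
  moreover have "card S = card (S - T) + card (S \<inter> T)"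
    using assms by (metis card_Diff_subset_Int card_mono inf_le1 le_add_diff_inverse2 finite_Int Diff_Int card_Diff_subset Diff_Diff_Int inf_commute)
  moreover have "card T = card (T - S) + card (S \<inter> T)"
    using assms by (metis card_Diff_subset_Int card_mono inf_le2 le_add_diff_inverse2 finite_Int Diff_Int card_Diff_subset Diff_Diff_Int inf_commute)
  ultimately show ?thesis by simp
qed

lemma hdist_sym: "hdist S T = hdist T S"
  unfolding hdist_def by (simp add: Un_commute)

lemma hdist_self: "hdist S S = 0"
  unfolding hdist_def by simp

lemma same_support:
  assumes "finite S" "\<forall>j<card S. X j \<in> J m w" "\<forall>j<card S. Y j \<in> J m w"
  shows "hdist (emb m S X) (emb m S Y) = mdist (card S) X Y"
proof -
  have fe: "finite (emb m S X)" "finite (emb m S Y)"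
    using finite_emb assms by blast+
  have h1: "hdist (emb m S X) (emb m S Y) + 2 * card (emb m S X \<inter> emb m S Y) = 2 * (card S * w)"
    using hdist_card[OF fe] card_emb[OF assms(1,2)] card_emb[OF assms(1,3)] by simp
  have c: "card (emb m S X \<inter> emb m S Y) = (\<Sum>j<card S. card (X j \<inter> Y j))"
    using card_int_emb[OF assms(1,2) assms(1,3)] sum.reindex_bij_betw[OF bij_idx[OF assms(1)], of "\<lambda>j. card (X j \<inter> Y j)"]
    by simp
  have "\<forall>j<card S. hdist (X j) (Y j) + 2 * card (X j \<inter> Y j) = 2 * w"
  proof (intro allI impI)
    fix j assume "j < card S"
    then have "X j \<in> J m w" "Y j \<in> J m w" using assms by auto
    then have "finite (X j)" "finite (Y j)" "card (X j) = w" "card (Y j) = w"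
      unfolding J_def by (auto intro: finite_subset)
    then show "hdist (X j) (Y j) + 2 * card (X j \<inter> Y j) = 2 * w" using hdist_card by simp
  qed
  then have "(\<Sum>j<card S. hdist (X j) (Y j) + 2 * card (X j \<inter> Y j)) = (\<Sum>j<card S. 2 * w)"
    by (intro sum.cong) auto
  then have "mdist (card S) X Y + 2 * (\<Sum>j<card S. card (X j \<inter> Y j)) = 2 * (card S * w)"
    unfolding mdist_def by (simp add: sum.distrib sum_distrib_left)
  with h1 c show ?thesis by simp
qed

lemma diff_support:
  assumes "finite S" "\<forall>j<card S. X j \<in> J m w"
    and "finite T" "\<forall>j<card T. Y j \<in> J m w'"
  shows "hdist (emb m S X) (emb m T Y) + 2 * (w * card (S \<inter> T)) \<ge> card S * w + card T * w'"
proof -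
  have fe: "finite (emb m S X)" "finite (emb m T Y)"
    using finite_emb assms by blast+
  have "card (emb m S X \<inter> emb m T Y) \<le> (\<Sum>c\<in>S\<inter>T. w)"
    unfolding card_int_emb[OF assms]
  proof (rule sum_mono)
    fix c assume "c \<in> S \<inter> T"
    then have "X (idx S c) \<in> J m w" using assms idx_lt by auto
    then show "card (X (idx S c) \<inter> Y (idx T c)) \<le> w"
      unfolding J_def by (metis (mono_tags, lifting) Int_lower1 card_mono finite_lessThan finite_subset mem_Collect_eq)
  qed
  then have "card (emb m S X \<inter> emb m T Y) \<le> w * card (S \<inter> T)" by (simp add: mult.commute)
  then show ?thesis using hdist_card[OF fe] card_emb[OF assms(1,2)] card_emb[OF assms(3,4)] by linarith
qed

lemma finite_J: "finite (J N W)"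
proof (rule finite_subset[of _ "Pow {..<N}"])
  show "J N W \<subseteq> Pow {..<N}" unfolding J_def by blast
qed simp

lemma B_set_finite:
  "finite {card C | C. C \<subseteq> J N W \<and> C \<noteq> {} \<and> (\<forall>S\<in>C. \<forall>T\<in>C. S \<noteq> T \<longrightarrow> hdist S T \<ge> 2 * d)}"
proof (rule finite_subset[of _ "{..card (J N W)}"])
  show "{card C | C. C \<subseteq> J N W \<and> C \<noteq> {} \<and> (\<forall>S\<in>C. \<forall>T\<in>C. S \<noteq> T \<longrightarrow> hdist S T \<ge> 2 * d)} \<subseteq> {..card (J N W)}"
  proof
    fix x assume "x \<in> {card C | C. C \<subseteq> J N W \<and> C \<noteq> {} \<and> (\<forall>S\<in>C. \<forall>T\<in>C. S \<noteq> T \<longrightarrow> hdist S T \<ge> 2 * d)}"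
    then obtain C where "x = card C" "C \<subseteq> J N W" by blast
    then show "x \<in> {..card (J N W)}" using card_mono[OF finite_J] by simp
  qed
qed simp

lemma B_ge:
  assumes "C \<subseteq> J N W" "C \<noteq> {}" "\<forall>S\<in>C. \<forall>T\<in>C. S \<noteq> T \<longrightarrow> hdist S T \<ge> 2 * d"
  shows "card C \<le> B N W d"
  unfolding B_def by (rule Max_ge[OF B_set_finite], rule CollectI, rule exI[of _ C]) (use assms in simp)

lemma B_attained:
  assumes "W \<le> N"
  shows "\<exists>C. C \<subseteq> J N W \<and> C \<noteq> {} \<and> (\<forall>S\<in>C. \<forall>T\<in>C. S \<noteq> T \<longrightarrow> hdist S T \<ge> 2 * d) \<and> card C = B N W d"
proof -
  have "{..<W} \<in> J N W" using assms unfolding J_def by simp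
  then have "1 \<in> {card C | C. C \<subseteq> J N W \<and> C \<noteq> {} \<and> (\<forall>S\<in>C. \<forall>T\<in>C. S \<noteq> T \<longrightarrow> hdist S T \<ge> 2 * d)}"
  proof -
    have "1 = card {{..<W::nat}} \<and> ({{..<W}} \<subseteq> J N W \<and> {{..<W}} \<noteq> {} \<and> (\<forall>S\<in>{{..<W}}. \<forall>T\<in>{{..<W}}. S \<noteq> T \<longrightarrow> hdist S T \<ge> 2 * d))"
      using \<open>{..<W} \<in> J N W\<close> by simp
    then show ?thesis by (intro CollectI exI[of _ "{{..<W}}"])
  qed
  then have ne: "{card C | C. C \<subseteq> J N W \<and> C \<noteq> {} \<and> (\<forall>S\<in>C. \<forall>T\<in>C. S \<noteq> T \<longrightarrow> hdist S T \<ge> 2 * d)} \<noteq> {}"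
    by (metis empty_iff)
  have "B N W d \<in> {card C | C. C \<subseteq> J N W \<and> C \<noteq> {} \<and> (\<forall>S\<in>C. \<forall>T\<in>C. S \<noteq> T \<longrightarrow> hdist S T \<ge> 2 * d)}"
    unfolding B_def by (rule Max_in[OF B_set_finite ne])
  then obtain C where "B N W d = card C \<and> (C \<subseteq> J N W \<and> C \<noteq> {} \<and> (\<forall>S\<in>C. \<forall>T\<in>C. S \<noteq> T \<longrightarrow> hdist S T \<ge> 2 * d))"
    unfolding mem_Collect_eq by (elim exE) (rule that)
  then show ?thesis by (intro exI[of _ C]) simp
qed

lemma finite_Jpow: "finite (Jpow m w n)"
  unfolding Jpow_def by (rule finite_PiE) (simp_all add: finite_J)

lemma A_set_finite:
  "finite {card C | C. C \<subseteq> Jpow m w n \<and> C \<noteq> {} \<and> (\<forall>X\<in>C. \<forall>Y\<in>C. X \<noteq> Y \<longrightarrow> mdist n X Y \<ge> 2 * d)}"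
proof (rule finite_subset[of _ "{..card (Jpow m w n)}"])
  show "{card C | C. C \<subseteq> Jpow m w n \<and> C \<noteq> {} \<and> (\<forall>X\<in>C. \<forall>Y\<in>C. X \<noteq> Y \<longrightarrow> mdist n X Y \<ge> 2 * d)} \<subseteq> {..card (Jpow m w n)}"
  proof
    fix x assume "x \<in> {card C | C. C \<subseteq> Jpow m w n \<and> C \<noteq> {} \<and> (\<forall>X\<in>C. \<forall>Y\<in>C. X \<noteq> Y \<longrightarrow> mdist n X Y \<ge> 2 * d)}"
    then obtain C where "x = card C" "C \<subseteq> Jpow m w n" by blast
    then show "x \<in> {..card (Jpow m w n)}" using card_mono[OF finite_Jpow] by simp
  qed
qed simp

lemma A_attained:
  assumes "w \<le> m"
  shows "\<exists>C. C \<subseteq> Jpow m w n \<and> C \<noteq> {} \<and> (\<forall>X\<in>C. \<forall>Y\<in>C. X \<noteq> Y \<longrightarrow> mdist n X Y \<ge> 2 * d) \<and> card C = A m n w d"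
proof -
  have "{..<w} \<in> J m w" using assms unfolding J_def by simp
  then have "(\<lambda>j\<in>{..<n}. {..<w}) \<in> Jpow m w n" unfolding Jpow_def by (simp add: PiE_iff)
  then have "1 \<in> {card C | C. C \<subseteq> Jpow m w n \<and> C \<noteq> {} \<and> (\<forall>X\<in>C. \<forall>Y\<in>C. X \<noteq> Y \<longrightarrow> mdist n X Y \<ge> 2 * d)}"
  proof -
    have "1 = card {\<lambda>j\<in>{..<n}. {..<w::nat}} \<and> ({\<lambda>j\<in>{..<n}. {..<w}} \<subseteq> Jpow m w n \<and> {\<lambda>j\<in>{..<n}. {..<w}} \<noteq> {} \<and> (\<forall>X\<in>{\<lambda>j\<in>{..<n}. {..<w}}. \<forall>Y\<in>{\<lambda>j\<in>{..<n}. {..<w}}. X \<noteq> Y \<longrightarrow> mdist n X Y \<ge> 2 * d))"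
      using \<open>(\<lambda>j\<in>{..<n}. {..<w}) \<in> Jpow m w n\<close> by simp
    then show ?thesis by (intro CollectI exI[of _ "{\<lambda>j\<in>{..<n}. {..<w}}"])
  qed
  then have ne: "{card C | C. C \<subseteq> Jpow m w n \<and> C \<noteq> {} \<and> (\<forall>X\<in>C. \<forall>Y\<in>C. X \<noteq> Y \<longrightarrow> mdist n X Y \<ge> 2 * d)} \<noteq> {}"
    by (metis empty_iff)
  have "A m n w d \<in> {card C | C. C \<subseteq> Jpow m w n \<and> C \<noteq> {} \<and> (\<forall>X\<in>C. \<forall>Y\<in>C. X \<noteq> Y \<longrightarrow> mdist n X Y \<ge> 2 * d)}"
    unfolding A_def by (rule Max_in[OF A_set_finite ne])
  then obtain C where "A m n w d = card C \<and> (C \<subseteq> Jpow m w n \<and> C \<noteq> {} \<and> (\<forall>X\<in>C. \<forall>Y\<in>C. X \<noteq> Y \<longrightarrow> mdist n X Y \<ge> 2 * d))"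
    unfolding mem_Collect_eq by (elim exE) (rule that)
  then show ?thesis by (intro exI[of _ C]) simp
qed

theorem proposition7:
  fixes m n w d l :: nat and ns :: "nat \<Rightarrow> nat"
  assumes "0 < m" "0 < n" "0 < w" "0 < d" "0 < l" "w \<le> m"
    and "ns 0 = n"
    and "\<forall>i. i + 1 < l \<longrightarrow> ns (i + 1) < ns i"
    and "\<forall>i<l. 0 < ns i"
    and "\<forall>i. 1 \<le> i \<and> i \<le> l - 1 \<longrightarrow>
           ns i dvd n * w \<and>
           real (n * w) / real m \<le> real (ns i) \<and>
           real (ns i) \<le> (1 - real d / real (n * w)) * real (ns (i - 1))"
  shows "(\<Sum>i<l. B n (ns i) d * A m (ns i) (n * w div ns i) d) \<le> B (m * n) (n * w) d"
proof -
  define wi where "wi i = n*w div ns i" for i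
  have step: "ns (Suc j) < ns j" if "Suc j < l" for j
    using assms(8)[rule_format, of j] that by simp
  have mono0: "\<forall>i. i \<le> j \<longrightarrow> ns j \<le> ns i" if "j < l" for j
    using that
  proof (induction j)
    case 0 then show ?case by simp
  next
    case (Suc j)
    have jl: "j < l" using Suc.prems by simp
    have lt: "ns (Suc j) < ns j" using step Suc.prems by blast
    have IH: "\<forall>i. i \<le> j \<longrightarrow> ns j \<le> ns i" using Suc.IH jl by blast
    show ?case
    proof (intro allI impI)
      fix i assume "i \<le> Suc j"
      then consider "i = Suc j" | "i \<le> j" by linarith
      then show "ns (Suc j) \<le> ns i"
      proof cases
        case 1 then show ?thesis by simp
      next
        case 2 then have "ns j \<le> ns i" using IH by blast
        then show ?thesis using lt by simp
      qed
    qed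
  qed
  have mono: "ns j \<le> ns i" if "j < l" "i \<le> j" for i j using mono0[OF that(1)] that(2) by blast
  have strict: "ns j < ns i" if "j < l" "i < j" for i j
  proof -
    have "j \<noteq> 0" using that(2) by simp
    then obtain k where k: "j = Suc k" using not0_implies_Suc by blast
    then have "ns j < ns k" using step that by blast
    moreover have "ns k \<le> ns i" using mono[of k i] that k by simp
    ultimately show ?thesis by simp
  qed
  have ns_inj: "i = i'" if "i < l" "i' < l" "ns i = ns i'" for i i'
  proof (rule ccontr)
    assume "i \<noteq> i'"
    then consider "i < i'" | "i' < i" by linarith
    then show False
    proof cases
      case 1 then show False using strict[of i' i] that by simp
    next
      case 2 then show False using strict[of i i'] that by simp
    qed
  qed
  have ns_le: "ns i \<le> n" if "i < l" for i using mono[of i 0] that assms(7) by simp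
  have nsp: "0 < ns i" if "i < l" for i using assms(9) that by simp
  have wfacts: "ns i * wi i = n*w \<and> wi i \<le> m \<and> 0 < wi i" if "i < l" for i
  proof (cases "i = 0")
    case True
    then have "wi i = w" unfolding wi_def using assms(2,7) by simp
    then show ?thesis using True assms by simp
  next
    case False
    then have h: "ns i dvd n * w \<and> real (n * w) / real m \<le> real (ns i)" using assms(10) that by auto
    then have e: "ns i * wi i = n*w" unfolding wi_def by simp
    have "real (n*w) \<le> real m * real (ns i)" using h assms(1) by (simp add: divide_le_eq mult.commute)
    then have "n*w \<le> m * ns i" by (metis of_nat_le_iff of_nat_mult)
    then have "ns i * wi i \<le> ns i * m" using e by (simp add: mult.commute)
    then have "wi i \<le> m" using nsp[OF that] by simp
    moreover have "0 < wi i" using e assms(2,3) by (metis mult_is_0 neq0_conv)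
    ultimately show ?thesis using e by simp
  qed
  have cross: "wi i * ns j + d \<le> n*w" if "i < j" "j < l" for i j
  proof -
    define N where "N = real (n*w)"
    have Np: "N > 0" unfolding N_def using assms(2,3) by simp
    have hj: "real (ns j) \<le> (1 - real d / N) * real (ns (j - 1))"
      using assms(10) that unfolding N_def by auto
    have e: "(1 - real d / N) * real (ns (j - 1)) * N = (N - real d) * real (ns (j-1))"
      using Np by (simp add: field_simps)
    have "real (ns j) * N \<le> (1 - real d / N) * real (ns (j - 1)) * N"
      using mult_right_mono[OF hj, of N] Np by simp
    then have h2: "real (ns j) * N \<le> (N - real d) * real (ns (j-1))"
      using e by linarith
    have nsj: "real (ns j) > 0" using nsp that by simp
    have Nd: "N - real d \<ge> 0"
    proof (rule ccontr)
      assume "\<not> ?thesis"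
      then have "(N - real d) * real (ns (j-1)) \<le> 0" by (simp add: mult_nonpos_nonneg)
      moreover have "real (ns j) * N > 0" using nsj Np by simp
      ultimately show False using h2 by simp
    qed
    have "ns (j-1) \<le> ns i" using mono[of "j-1" i] that by simp
    then have "(N - real d) * real (ns (j-1)) \<le> (N - real d) * real (ns i)"
      using Nd by (simp add: mult_left_mono)
    with h2 have h3: "real (ns j) * N \<le> (N - real d) * real (ns i)" by simp
    have "real (wi i) * real (ns i) = N" using wfacts[of i] that unfolding N_def
      by (metis less_trans mult.commute of_nat_mult)
    then have eqN: "real (wi i) * real (ns i) = N" .
    have "(real (wi i) * real (ns j)) * real (ns i) = real (ns j) * (real (wi i) * real (ns i))"
      by (simp add: algebra_simps)
    also have "\<dots> = real (ns j) * N" using eqN by simp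
    finally have "(real (wi i) * real (ns j)) * real (ns i) \<le> (N - real d) * real (ns i)"
      using h3 by linarith
    then have "real (wi i) * real (ns j) \<le> N - real d"
      using nsp[of i] that by simp
    then show ?thesis unfolding N_def by (metis of_nat_add of_nat_le_iff of_nat_mult le_diff_eq)
  qed
  define PB where "PB i C \<longleftrightarrow> C \<subseteq> J n (ns i) \<and> C \<noteq> {} \<and> (\<forall>S\<in>C. \<forall>T\<in>C. S \<noteq> T \<longrightarrow> hdist S T \<ge> 2 * d) \<and> card C = B n (ns i) d" for i C
  define PA where "PA i C \<longleftrightarrow> C \<subseteq> Jpow m (wi i) (ns i) \<and> C \<noteq> {} \<and> (\<forall>X\<in>C. \<forall>Y\<in>C. X \<noteq> Y \<longrightarrow> mdist (ns i) X Y \<ge> 2 * d) \<and> card C = A m (ns i) (wi i) d" for i C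
  define CB where "CB i = (SOME C. PB i C)" for i
  define CA where "CA i = (SOME C. PA i C)" for i
  have PBi: "PB i (CB i)" if "i < l" for i
    unfolding CB_def PB_def by (rule someI_ex, rule B_attained, rule ns_le[OF that])
  have PAi: "PA i (CA i)" if "i < l" for i
    unfolding CA_def PA_def by (rule someI_ex, rule A_attained) (use wfacts[OF that] in simp)
  have Sfacts: "finite S \<and> card S = ns i \<and> S \<subseteq> {..<n}" if "i < l" "S \<in> CB i" for i S
    using PBi[OF that(1)] that(2) unfolding PB_def J_def by (auto intro: finite_subset)
  have Xfacts: "\<forall>j<card S. X j \<in> J m (wi i)" if "i < l" "S \<in> CB i" "X \<in> CA i" for i S X
    using PAi[OF that(1)] that(3) Sfacts[OF that(1,2)] unfolding PA_def Jpow_def by (auto simp: PiE_iff)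
  have crossD: "2 * d \<le> hdist (emb m S X) (emb m S' X')"
    if "i < i'" "i' < l" "S \<in> CB i" "X \<in> CA i" "S' \<in> CB i'" "X' \<in> CA i'" for i i' S X S' X'
  proof -
    have il: "i < l" using that by simp
    note s1 = Sfacts[OF il that(3)] and s2 = Sfacts[OF that(2,5)]
    note x1 = Xfacts[OF il that(3,4)] and x2 = Xfacts[OF that(2,5,6)]
    have D: "hdist (emb m S X) (emb m S' X') + 2 * (wi i * card (S \<inter> S')) \<ge> card S * wi i + card S' * wi i'"
      using diff_support[OF _ x1 _ x2] s1 s2 by blast
    have "card S * wi i = n*w" "card S' * wi i' = n*w" using s1 s2 wfacts il that(2) by auto
    moreover have "card (S \<inter> S') \<le> ns i'" using s2 card_mono[of S' "S \<inter> S'"] by auto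
    then have "wi i * card (S \<inter> S') \<le> wi i * ns i'" by simp
    moreover have "wi i * ns i' + d \<le> n*w" using cross that by simp
    ultimately show ?thesis using D by linarith
  qed
  have key: "2 * d \<le> hdist (emb m S X) (emb m S' X')"
    if "i < l" "S \<in> CB i" "X \<in> CA i" "i' < l" "S' \<in> CB i'" "X' \<in> CA i'"
       "(i, S, X) \<noteq> (i', S', X')" for i i' S X S' X'
  proof -
    note s1 = Sfacts[OF that(1,2)] and s2 = Sfacts[OF that(4,5)]
    note x1 = Xfacts[OF that(1,2,3)] and x2 = Xfacts[OF that(4,5,6)]
    show ?thesis
    proof (cases "i = i'")
      case True
      show ?thesis
      proof (cases "S = S'")
        case True
        with \<open>i = i'\<close> that have "X \<noteq> X'" by auto
        moreover have "X \<in> CA i" "X' \<in> CA i" using that \<open>i = i'\<close> by auto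
        ultimately have "mdist (ns i) X X' \<ge> 2 * d" using PAi[OF that(1)] unfolding PA_def by blast
        moreover have "hdist (emb m S X) (emb m S' X') = mdist (card S) X X'"
          using same_support[OF _ x1, of X'] x2 s1 True \<open>i = i'\<close> by simp
        ultimately show ?thesis using s1 by simp
      next
        case False
        have "S' \<in> CB i" using that True by simp
        then have hS: "hdist S S' \<ge> 2 * d" using PBi[OF that(1)] that(2) False unfolding PB_def by blast
        have hc: "hdist S S' + 2 * card (S \<inter> S') = 2 * ns i" using hdist_card[of S S'] s1 s2 True by simp
        have wi_def': "wi i' = wi i" using True by simp
        have D: "hdist (emb m S X) (emb m S' X') + 2 * (wi i * card (S \<inter> S')) \<ge> card S * wi i + card S' * wi i'"
          using diff_support[OF _ x1 _ x2] s1 s2 by blast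
        then have D': "hdist (emb m S X) (emb m S' X') + 2 * (wi i * card (S \<inter> S')) \<ge> 2 * (wi i * ns i)"
          using s1 s2 True by (simp add: mult.commute)
        have "card (S \<inter> S') + d \<le> ns i" using hS hc by linarith
        then have m1: "wi i * card (S \<inter> S') + wi i * d \<le> wi i * ns i"
          by (metis add_mult_distrib2 mult_le_mono2)
        have "d \<le> wi i * d" using wfacts[OF that(1)] by simp
        with D' m1 show ?thesis by linarith
      qed
    next
      case False
      then show ?thesis
      proof (cases "i < i'")
        case True
        then show ?thesis using crossD that by blast
      next
        case False
        then have "i' < i" using \<open>i \<noteq> i'\<close> by simp
        then have "2 * d \<le> hdist (emb m S' X') (emb m S X)" using crossD that by blast
        then show ?thesis by (simp add: hdist_sym)
      qed
    qed
  qed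
  define T where "T = (SIGMA i:{..<l}. CB i \<times> CA i)"
  define f where "f = (\<lambda>(i::nat, S, X). emb m S X)"
  have Tdist: "2 * d \<le> hdist (f p) (f q)" if "p \<in> T" "q \<in> T" "p \<noteq> q" for p q
  proof -
    obtain i S X where p: "p = (i, S, X)" by (cases p) blast
    obtain i' S' X' where q: "q = (i', S', X')" by (cases q) blast
    have "i < l" "S \<in> CB i" "X \<in> CA i" using that(1) p unfolding T_def by auto
    moreover have "i' < l" "S' \<in> CB i'" "X' \<in> CA i'" using that(2) q unfolding T_def by auto
    moreover have "(i, S, X) \<noteq> (i', S', X')" using that(3) p q by simp
    ultimately have "2 * d \<le> hdist (emb m S X) (emb m S' X')" by (rule key)
    then show ?thesis unfolding f_def p q by simp
  qed
  have inj: "inj_on f T"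
  proof (rule inj_onI, rule ccontr)
    fix p q assume "p \<in> T" "q \<in> T" "f p = f q" "p \<noteq> q"
    then have "2 * d \<le> hdist (f p) (f q)" using Tdist by blast
    then show False using \<open>f p = f q\<close> hdist_self assms(4) by simp
  qed
  have finCB: "finite (CB i)" if "i < l" for i
    using PBi[OF that] finite_J unfolding PB_def by (blast intro: finite_subset)
  have finCA: "finite (CA i)" if "i < l" for i
    using PAi[OF that] finite_Jpow unfolding PA_def by (blast intro: finite_subset)
  have "card (f ` T) = card T" by (rule card_image[OF inj])
  also have "\<dots> = (\<Sum>i<l. card (CB i \<times> CA i))"
    unfolding T_def by (rule card_SigmaI) (use finCB finCA in auto)
  also have "\<dots> = (\<Sum>i<l. B n (ns i) d * A m (ns i) (n * w div ns i) d)"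
  proof (rule sum.cong)
    fix i assume "i \<in> {..<l}"
    then have "i < l" by simp
    then show "card (CB i \<times> CA i) = B n (ns i) d * A m (ns i) (n * w div ns i) d"
      using PBi PAi unfolding PB_def PA_def wi_def by (simp add: card_cartesian_product)
  qed simp
  finally have cardeq: "card (f ` T) = (\<Sum>i<l. B n (ns i) d * A m (ns i) (n * w div ns i) d)" .
  have sub: "f ` T \<subseteq> J (m*n) (n*w)"
  proof
    fix U assume "U \<in> f ` T"
    then obtain i S X where p: "i < l" "S \<in> CB i" "X \<in> CA i" "U = emb m S X"
      unfolding T_def f_def by auto
    note s1 = Sfacts[OF p(1,2)] and x1 = Xfacts[OF p(1,2,3)]
    have "U \<subseteq> {..<m*n}" using emb_sub[OF _ x1] s1 p(4) by blast
    moreover have "card U = n*w" using card_emb[OF _ x1] s1 p(4) wfacts[OF p(1)] by simp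
    ultimately show "U \<in> J (m*n) (n*w)" unfolding J_def by simp
  qed
  have ne: "f ` T \<noteq> {}"
  proof -
    obtain S where "S \<in> CB 0" using PBi[OF assms(5)] unfolding PB_def by auto
    moreover obtain X where "X \<in> CA 0" using PAi[OF assms(5)] unfolding PA_def by auto
    ultimately have "(0, S, X) \<in> T" unfolding T_def using assms(5) by auto
    then show ?thesis by auto
  qed
  have dist: "\<forall>U\<in>f ` T. \<forall>V\<in>f ` T. U \<noteq> V \<longrightarrow> hdist U V \<ge> 2 * d"
    using Tdist by blast
  show ?thesis using B_ge[OF sub ne dist] cardeq by simp
qed

end
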